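(* Fix $\beta>1$. There exist $\varepsilon>0$ and $\delta>0$ such that for every power series of the form $g(x)=1+\sum_{k=1}^\infty(a_k-b_k)x^k$ with $(a_1,a_2,\ldots)\in S_\beta^+$ and $(b_1,b_2,\ldots)\in S_\beta^+$, and every $x\in[0,1/\beta+\varepsilon]$, if $|g(x)|<\delta$ then $g'(x)<-\delta$.
   Context: For $\beta>1$ let $f_\beta\colon[0,1]\to[0,1)$, $f_\beta(x)=\beta x\bmod 1$, and for $x\in[0,1]$ let $d(x,\beta)=(d_k(x,\beta))_{k\ge1}$ with $d_k(x,\beta)=\lfloor\beta f_\beta^{k-1}(x)\rfloor$. $S_\beta^+$ denotes the closure, in the product topology on $\{0,1,\ldots,\lfloor\beta\rfloor\}^{\mathbb N}$, of $\{d(x,\beta):x\in[0,1)\}$. *)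

theory Defs
  imports "HOL-Analysis.Analysis"
begin

definition fbeta :: "real \<Rightarrow> real \<Rightarrow> real" where
  "fbeta \<beta> x = \<beta> * x - of_int \<lfloor>\<beta> * x\<rfloor>"

text \<open>Greedy digits, 0-indexed: beta_digit beta x k = d_(k+1)(x, beta)
  = floor(beta * f_beta^k(x)).\<close>
definition beta_digit :: "real \<Rightarrow> real \<Rightarrow> nat \<Rightarrow> nat" where
  "beta_digit \<beta> x k = nat \<lfloor>\<beta> * (fbeta \<beta> ^^ k) x\<rfloor>"

text \<open>S_beta^+: closure (product topology on nat => nat, nat discrete) of the
  digit sequences of points of [0,1). Sequences are 0-indexed (s 0 = s_1).\<close>
definition Sbeta_plus :: "real \<Rightarrow> (nat \<Rightarrow> nat) set" where
  "Sbeta_plus \<beta> = closure ((\<lambda>x. beta_digit \<beta> x) ` {0..<1})"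

definition gser :: "(nat \<Rightarrow> nat) \<Rightarrow> (nat \<Rightarrow> nat) \<Rightarrow> real \<Rightarrow> real" where
  "gser a b y = 1 + (\<Sum>k. (real (a k) - real (b k)) * y ^ Suc k)"

end

theory Submission
  imports Defs
begin


lemma fbeta_range: "0 \<le> fbeta \<beta> x \<and> fbeta \<beta> x < 1"
  unfolding fbeta_def by linarith

lemma iter_nonneg: "0 \<le> x \<Longrightarrow> 0 \<le> (fbeta \<beta> ^^ k) x"
  by (cases k) (auto simp: fbeta_range)

lemma iter_lt1: "x < 1 \<Longrightarrow> (fbeta \<beta> ^^ k) x < 1"
  by (cases k) (auto simp: fbeta_range)

lemma digit_expand:
  assumes b: "\<beta> > 1" and x: "0 \<le> x"
  shows "x = (\<Sum>k<N. real (beta_digit \<beta> x k) / \<beta>^(Suc k)) + (fbeta \<beta> ^^ N) x / \<beta>^N"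
proof (induction N)
  case 0 then show ?case by simp
next
  case (Suc N)
  let ?y = "(fbeta \<beta> ^^ N) x"
  have y0: "0 \<le> ?y" using iter_nonneg[OF x] .
  have fl: "0 \<le> \<lfloor>\<beta> * ?y\<rfloor>" using y0 b by simp
  have d: "real (beta_digit \<beta> x N) = of_int \<lfloor>\<beta> * ?y\<rfloor>"
    unfolding beta_digit_def using fl by simp
  have n: "fbeta \<beta> ?y = \<beta> * ?y - of_int \<lfloor>\<beta> * ?y\<rfloor>"
    by (simp add: fbeta_def)
  have "?y / \<beta>^N = real (beta_digit \<beta> x N) / \<beta>^(Suc N) + (fbeta \<beta> ^^ Suc N) x / \<beta>^(Suc N)"
    using b by (simp add: d n field_simps)
  with Suc show ?case by simp
qed

lemma digit_props:
  assumes b: "\<beta> > 1" and x: "0 \<le> x" "x < 1"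
  shows "beta_digit \<beta> x k \<le> nat \<lfloor>\<beta>\<rfloor>"
    and "(\<Sum>k<N. real (beta_digit \<beta> x k) / \<beta>^(Suc k)) \<le> 1"
proof -
  let ?y = "(fbeta \<beta> ^^ k) x"
  have "0 \<le> ?y" "?y < 1" using iter_nonneg[OF x(1)] iter_lt1[OF x(2)] by auto
  then have "\<beta> * ?y \<le> \<beta>" using b by (simp add: mult_left_le)
  then have "\<lfloor>\<beta> * ?y\<rfloor> \<le> \<lfloor>\<beta>\<rfloor>" by (rule floor_mono)
  then show "beta_digit \<beta> x k \<le> nat \<lfloor>\<beta>\<rfloor>" unfolding beta_digit_def by (simp add: nat_mono)
  have "0 \<le> (fbeta \<beta> ^^ N) x / \<beta>^N" using iter_nonneg[OF x(1)] b by simp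
  then show "(\<Sum>k<N. real (beta_digit \<beta> x k) / \<beta>^(Suc k)) \<le> 1"
    using digit_expand[OF b x(1), of N] x(2) by linarith
qed

lemma closed_P:
  assumes b0: "\<beta> \<noteq> (0::real)"
  shows "closed {c::nat\<Rightarrow>nat. (\<forall>k. c k \<le> m) \<and> (\<forall>N. (\<Sum>k<N. real (c k) / \<beta>^(Suc k)) \<le> 1)}"
proof -
  have cont: "continuous_on UNIV (\<lambda>c::nat\<Rightarrow>nat. real (c k))" for k
  proof -
    have "continuous_on UNIV (\<lambda>c::nat\<Rightarrow>nat. c k)" by simp
    moreover have "continuous_on UNIV (real :: nat \<Rightarrow> real)"
      by (simp add: continuous_on_discrete)
    ultimately show ?thesis using continuous_on_compose[of UNIV "\<lambda>c::nat\<Rightarrow>nat. c k" real] by (simp add: o_def)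
  qed
  have c1: "closed {c::nat\<Rightarrow>nat. c k \<le> m}" for k
  proof -
    have "closed {c::nat\<Rightarrow>nat. real (c k) \<le> real m}" by (rule closed_Collect_le[OF cont continuous_on_const])
    then show ?thesis by simp
  qed
  have c2: "closed {c::nat\<Rightarrow>nat. (\<Sum>k<N. real (c k) / \<beta>^(Suc k)) \<le> 1}" for N
  proof -
    have "continuous_on UNIV (\<lambda>c::nat\<Rightarrow>nat. (\<Sum>k<N. real (c k) / \<beta>^(Suc k)))"
      by (rule continuous_on_sum, rule continuous_on_divide, rule cont, rule continuous_on_const, simp add: b0)
    then show ?thesis by (rule closed_Collect_le[OF _ continuous_on_const])
  qed
  have eq: "{c::nat\<Rightarrow>nat. (\<forall>k. c k \<le> m) \<and> (\<forall>N. (\<Sum>k<N. real (c k) / \<beta>^(Suc k)) \<le> 1)}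
     = (\<Inter>k. {c. c k \<le> m}) \<inter> (\<Inter>N. {c. (\<Sum>k<N. real (c k) / \<beta>^(Suc k)) \<le> 1})" by auto
  show ?thesis unfolding eq using c1 c2 by (intro closed_Int closed_INT) auto
qed

lemma Sbeta_props:
  assumes b: "\<beta> > 1" and c: "c \<in> Sbeta_plus \<beta>"
  shows "c k \<le> nat \<lfloor>\<beta>\<rfloor>" "(\<Sum>k<N. real (c k) / \<beta>^(Suc k)) \<le> 1"
proof -
  let ?P = "{c::nat\<Rightarrow>nat. (\<forall>k. c k \<le> nat \<lfloor>\<beta>\<rfloor>) \<and> (\<forall>N. (\<Sum>k<N. real (c k) / \<beta>^(Suc k)) \<le> 1)}"
  have "(\<lambda>x. beta_digit \<beta> x) ` {0..<1} \<subseteq> ?P" using digit_props[OF b] by auto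
  then have "Sbeta_plus \<beta> \<subseteq> ?P" unfolding Sbeta_plus_def
    by (rule closure_minimal[OF _ closed_P]) (use b in auto)
  with c show "c k \<le> nat \<lfloor>\<beta>\<rfloor>" "(\<Sum>k<N. real (c k) / \<beta>^(Suc k)) \<le> 1" by auto
qed



definition S :: "(nat\<Rightarrow>nat) \<Rightarrow> real \<Rightarrow> real" where "S c x = (\<Sum>k. real (c k) * x^Suc k)"
definition D :: "(nat\<Rightarrow>nat) \<Rightarrow> real \<Rightarrow> real" where "D c x = (\<Sum>k. real (Suc k) * real (c k) * x^k)"

lemma summable_geomS: "0 \<le> (x::real) \<Longrightarrow> x < 1 \<Longrightarrow> summable (\<lambda>k. B * x^Suc k)"
  using summable_mult[OF summable_geometric[of x], of "B*x"] by (simp add: mult.assoc)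

lemma summable_nx: "0 \<le> x \<Longrightarrow> x < (1::real) \<Longrightarrow> summable (\<lambda>k. real (Suc k) * x^k)"
proof -
  assume "0 \<le> x" "x < 1"
  have "summable (\<lambda>n. diffs (\<lambda>_. 1::real) n * x ^ n)"
    by (rule termdiff_converges[of x 1]) (use \<open>0 \<le> x\<close> \<open>x < 1\<close> in auto)
  then show ?thesis by (simp add: diffs_def)
qed

lemma summable_S: assumes "\<forall>k. real (c k) \<le> B" "0 \<le> x" "x < 1"
  shows "summable (\<lambda>k. real (c k) * x^Suc k)"
proof (rule summable_comparison_test'[OF summable_geomS[OF assms(2,3), of B]])
  fix n show "norm (real (c n) * x ^ Suc n) \<le> B * x ^ Suc n"
    using assms by (simp add: mult_right_mono)
qed

lemma summable_D: assumes "\<forall>k. real (c k) \<le> B" "0 \<le> x" "x < 1"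
  shows "summable (\<lambda>k. real (Suc k) * real (c k) * x^k)"
proof (rule summable_comparison_test'[OF summable_mult[OF summable_nx[OF assms(2,3)], of B]])
  fix n show "norm (real (Suc n) * real (c n) * x ^ n) \<le> B * (real (Suc n) * x ^ n)"
    using assms mult_right_mono[of "real (c n)" B "real (Suc n) * x^n"] by (simp add: algebra_simps)
qed

lemma S_nonneg: assumes "\<forall>k. real (c k) \<le> B" "0 \<le> x" "x < 1" shows "0 \<le> S c x"
  unfolding S_def by (rule suminf_nonneg[OF summable_S[OF assms]]) (use assms in auto)

lemma S_mono: assumes "\<forall>k. real (c k) \<le> B" "0 \<le> x" "x \<le> y" "y < 1"
  shows "S c x \<le> S c y"
  unfolding S_def
proof (rule suminf_le)
  show "summable (\<lambda>k. real (c k) * x^Suc k)" using summable_S assms by auto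
  show "summable (\<lambda>k. real (c k) * y^Suc k)" using summable_S assms by auto
  fix n show "real (c n) * x ^ Suc n \<le> real (c n) * y ^ Suc n"
    using assms by (intro mult_left_mono power_mono) auto
qed

lemma S_le_1: assumes b: "\<beta> > 1" "\<forall>k. real (c k) \<le> \<beta>" "\<forall>N. (\<Sum>k<N. real (c k) / \<beta>^(Suc k)) \<le> 1"
  shows "S c (1/\<beta>) \<le> 1"
  unfolding S_def
proof (rule suminf_le_const)
  show "summable (\<lambda>k. real (c k) * (1/\<beta>)^Suc k)" by (rule summable_S[OF b(2)]) (use b in auto)
  fix n show "(\<Sum>k<n. real (c k) * (1/\<beta>)^Suc k) \<le> 1"
    using b(3) unfolding power_one_over by simp
qed

lemma S_le_geom: assumes "\<forall>k. real (c k) \<le> B" "0 \<le> x" "x < 1"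
  shows "S c x \<le> B * x / (1 - x)"
proof -
  have "S c x \<le> (\<Sum>k. B * x^Suc k)" unfolding S_def
    by (rule suminf_le) (use assms summable_S summable_geomS in \<open>auto intro: mult_right_mono\<close>)
  also have "(\<Sum>k. B * x^Suc k) = B * x * (\<Sum>k. x^k)"
    using suminf_mult[OF summable_geometric[of x], of "B*x"] assms by (simp add: mult.assoc)
  also have "\<dots> = B * x / (1 - x)" using suminf_geometric[of x] assms by simp
  finally show ?thesis .
qed

lemma S_diff: assumes "\<forall>k. real (c k) \<le> B" "0 \<le> q" "q \<le> x" "x < 1"
  shows "S c x - S c q \<le> B * (x / (1 - x) - q / (1 - q))"
proof -
  have s1: "summable (\<lambda>k. real (c k) * x^Suc k)" "summable (\<lambda>k. real (c k) * q^Suc k)"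
    using summable_S assms by auto
  have g1: "summable (\<lambda>k. B * x^Suc k)" "summable (\<lambda>k. B * q^Suc k)"
    using summable_geomS assms by auto
  have "S c x - S c q = (\<Sum>k. real (c k) * x^Suc k - real (c k) * q^Suc k)"
    unfolding S_def using suminf_diff[OF s1] by simp
  also have "\<dots> \<le> (\<Sum>k. B * x^Suc k - B * q^Suc k)"
  proof (rule suminf_le)
    show "summable (\<lambda>k. real (c k) * x^Suc k - real (c k) * q^Suc k)" using s1 by (rule summable_diff)
    show "summable (\<lambda>k. B * x^Suc k - B * q^Suc k)" using g1 by (rule summable_diff)
    fix n
    have "q^Suc n \<le> x^Suc n" using assms by (intro power_mono) auto
    then show "real (c n) * x ^ Suc n - real (c n) * q ^ Suc n \<le> B * x ^ Suc n - B * q ^ Suc n"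
      using assms mult_right_mono[of "real (c n)" B "x^Suc n - q^Suc n"] by (simp add: algebra_simps)
  qed
  also have "\<dots> = (\<Sum>k. B * x^Suc k) - (\<Sum>k. B * q^Suc k)" using suminf_diff[OF g1] by simp
  also have "(\<Sum>k. B * x^Suc k) = B * (x / (1 - x))"
    using suminf_mult[OF summable_geometric[of x], of "B*x"] suminf_geometric[of x] assms
    by (simp add: mult.assoc)
  also have "(\<Sum>k. B * q^Suc k) = B * (q / (1 - q))"
    using suminf_mult[OF summable_geometric[of q], of "B*q"] suminf_geometric[of q] assms
    by (simp add: mult.assoc)
  finally show ?thesis by (simp add: algebra_simps)
qed

lemma D_ge_S: assumes "\<forall>k. real (c k) \<le> B" "0 \<le> x" "x < 1"
  shows "S c x \<le> D c x"
  unfolding S_def D_def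
proof (rule suminf_le)
  show "summable (\<lambda>k. real (c k) * x^Suc k)" using summable_S assms by auto
  show "summable (\<lambda>k. real (Suc k) * real (c k) * x^k)" using summable_D assms by auto
  fix n
  have "x^Suc n \<le> x^n" using assms by (simp add: mult_left_le_one_le)
  also have "\<dots> \<le> real (Suc n) * x^n" using assms by (simp add: algebra_simps)
  finally have "x^Suc n \<le> real (Suc n) * x^n" .
  then show "real (c n) * x ^ Suc n \<le> real (Suc n) * real (c n) * x ^ n"
    using mult_left_mono[of "x^Suc n" "real (Suc n) * x^n" "real (c n)"] by (simp add: algebra_simps)
qed

lemma term_le_S: assumes "\<forall>k. real (c k) \<le> B" "0 \<le> x" "x < 1" "c k \<noteq> 0"
  shows "x^Suc k \<le> S c x"
proof -
  have "1 \<le> real (c k)" using assms by simp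
  then have "x^Suc k \<le> real (c k) * x^Suc k" using mult_right_mono[of 1 "real (c k)" "x^Suc k"] assms by simp
  also have "\<dots> = sum (\<lambda>k. real (c k) * x^Suc k) {k}" by simp
  also have "\<dots> \<le> S c x" unfolding S_def
    by (rule sum_le_suminf) (use summable_S assms in auto)
  finally show ?thesis .
qed

lemma D_tail: assumes "\<forall>k. real (c k) \<le> B" "0 \<le> x" "x \<le> r" "r < 1" "\<forall>k<K. c k = 0"
  shows "D c x \<le> (\<Sum>i. B * (real (Suc (i+K)) * r^(i+K)))"
proof -
  let ?f = "\<lambda>k. real (Suc k) * real (c k) * x^k"
  have sf: "summable ?f" using summable_D assms by auto
  have "D c x = (\<Sum>n. ?f (n+K)) + sum ?f {..<K}" unfolding D_def by (rule suminf_split_initial_segment[OF sf])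
  also have "sum ?f {..<K} = 0" using assms by simp
  also have "(\<Sum>n. ?f (n+K)) \<le> (\<Sum>i. B * (real (Suc (i+K)) * r^(i+K)))"
  proof (rule suminf_le)
    show "summable (\<lambda>n. ?f (n+K))" using sf by (rule summable_ignore_initial_segment)
    show "summable (\<lambda>i. B * (real (Suc (i+K)) * r^(i+K)))"
      by (rule summable_mult, rule summable_ignore_initial_segment[OF summable_nx]) (use assms in auto)
    fix n
    have "x^(n+K) \<le> r^(n+K)" using assms by (intro power_mono) auto
    have "real (c (n+K)) * x^(n+K) \<le> B * r^(n+K)"
      using assms \<open>x^(n+K) \<le> r^(n+K)\<close> by (intro mult_mono) auto
    then show "?f (n+K) \<le> B * (real (Suc (n+K)) * r^(n+K))"
      using mult_left_mono[of "real (c (n+K)) * x^(n+K)" "B * r^(n+K)" "real (Suc (n+K))"]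
      by (simp add: algebra_simps)
  qed
  finally show ?thesis by simp
qed

lemma gser_eq: assumes "\<forall>k. real (a k) \<le> B" "\<forall>k. real (b k) \<le> B" "0 \<le> x" "x < 1"
  shows "gser a b x = 1 + S a x - S b x"
proof -
  have "(\<Sum>k. (real (a k) - real (b k)) * x ^ Suc k) = (\<Sum>k. real (a k) * x^Suc k - real (b k) * x^Suc k)"
    by (simp add: algebra_simps)
  also have "\<dots> = S a x - S b x" unfolding S_def
    by (rule suminf_diff[symmetric]) (use summable_S assms in auto)
  finally show ?thesis unfolding gser_def by simp
qed

lemma deriv_gser: assumes "\<forall>k. real (a k) \<le> B" "\<forall>k. real (b k) \<le> B" "0 \<le> x" "x < 1"
  shows "deriv (gser a b) x = D a x - D b x"
proof -
  define cc where "cc n = (case n of 0 \<Rightarrow> 0 | Suc k \<Rightarrow> real (a k) - real (b k))" for n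
  have feq: "gser a b = (\<lambda>y. 1 + (\<Sum>n. cc n * y^n))"
  proof
    fix y :: real
    have iff: "(\<lambda>n. cc n * y^n) sums s \<longleftrightarrow> (\<lambda>k. (real (a k) - real (b k)) * y ^ Suc k) sums s" for s
      using sums_Suc_iff[of "\<lambda>n. cc n * y^n" s] by (simp add: cc_def)
    have eqs: "(sums) (\<lambda>n. cc n * y^n) = (sums) (\<lambda>k. (real (a k) - real (b k)) * y ^ Suc k)"
      by (rule ext) (rule iff)
    have "(\<Sum>n. cc n * y^n) = (\<Sum>k. (real (a k) - real (b k)) * y ^ Suc k)"
      unfolding suminf_def eqs ..
    then show "gser a b y = 1 + (\<Sum>n. cc n * y^n)" unfolding gser_def by simp
  qed
  define K where "K = (1 + x) / 2"
  have K: "x < K" "K < 1" "0 \<le> K" using assms by (auto simp: K_def)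
  have ccb: "\<bar>cc n\<bar> \<le> B" for n
  proof (cases n)
    case 0 then show ?thesis using assms(1)[rule_format, of 0] by (simp add: cc_def)
  next
    case (Suc k)
    have "real (a k) \<le> B" "real (b k) \<le> B" "0 \<le> real (a k)" "0 \<le> real (b k)" using assms by auto
    then show ?thesis using Suc by (simp add: cc_def abs_le_iff)
  qed
  have "summable (\<lambda>n. cc n * K^n)"
  proof (rule summable_comparison_test'[OF summable_mult[OF summable_geometric[of K], of B]])
    show "norm K < 1" using K by simp
    fix n show "norm (cc n * K^n) \<le> B * K^n"
      using ccb[of n] K by (simp add: abs_mult mult_right_mono)
  qed
  then have "DERIV (\<lambda>y. \<Sum>n. cc n * y^n) x :> (\<Sum>n. diffs cc n * x^n)"
    by (rule termdiffs_strong) (use K assms in auto)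
  then have "DERIV (gser a b) x :> (\<Sum>n. diffs cc n * x^n)"
    unfolding feq by (auto intro!: derivative_eq_intros)
  then have "deriv (gser a b) x = (\<Sum>n. diffs cc n * x^n)" by (rule DERIV_imp_deriv)
  also have "\<dots> = (\<Sum>n. real (Suc n) * real (a n) * x^n - real (Suc n) * real (b n) * x^n)"
    by (simp add: diffs_def cc_def algebra_simps)
  also have "\<dots> = D a x - D b x" unfolding D_def
    by (rule suminf_diff[symmetric]) (use summable_D assms in auto)
  finally show ?thesis .
qed


theorem lemma5p1:
  fixes \<beta> :: real
  assumes "\<beta> > 1"
  shows "\<exists>\<epsilon>>0. \<exists>\<delta>>0. \<forall>a\<in>Sbeta_plus \<beta>. \<forall>b\<in>Sbeta_plus \<beta>.
           \<forall>x\<in>{0..1/\<beta> + \<epsilon>}.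
             \<bar>gser a b x\<bar> < \<delta> \<longrightarrow> deriv (gser a b) x < - \<delta>"
proof -
  have b1: "\<beta> > 1" by fact
  have bnd: "real (c k) \<le> \<beta>" if "c \<in> Sbeta_plus \<beta>" for c k
  proof -
    have "c k \<le> nat \<lfloor>\<beta>\<rfloor>" using Sbeta_props(1)[OF b1 that] .
    then have "real (c k) \<le> real (nat \<lfloor>\<beta>\<rfloor>)" by simp
    also have "\<dots> = of_int \<lfloor>\<beta>\<rfloor>" using b1 by simp
    also have "\<dots> \<le> \<beta>" by simp
    finally show ?thesis .
  qed
  define q where "q = 1 / \<beta>"
  have q: "0 < q" "q < 1" using b1 by (auto simp: q_def)
  define r where "r = (1 + q) / 2"
  have r: "q < r" "r < 1" "0 < 1 - r" using q by (auto simp: r_def)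
  define x0 where "x0 = (1 - r) / (2 * \<beta>)"
  have x0: "0 < x0" using r b1 by (simp add: x0_def)
  have "summable (\<lambda>k. \<beta> * (real (Suc k) * r^k))"
    by (rule summable_mult, rule summable_nx) (use r q in auto)
  from suminf_exist_split[OF _ this, of "1/2"]
  obtain K where K: "norm (\<Sum>i. \<beta> * (real (Suc (i+K)) * r^(i+K))) < 1/2" by auto
  define T where "T = (\<Sum>i. \<beta> * (real (Suc (i+K)) * r^(i+K)))"
  have T: "T < 1/2" using K unfolding T_def by simp
  define \<theta> where "\<theta> = x0 ^ K"
  have th: "0 < \<theta>" using x0 by (simp add: \<theta>_def)
  define \<epsilon> where "\<epsilon> = min ((1 - q) / 2) (\<theta> * (1 - r) * (1 - q) / (2 * \<beta>))"
  have eps: "0 < \<epsilon>" "\<epsilon> \<le> (1 - q) / 2" "\<epsilon> \<le> \<theta> * (1 - r) * (1 - q) / (2 * \<beta>)"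
  proof -
    have "0 < \<theta> * (1 - r) * (1 - q) / (2 * \<beta>)" using q r th b1 by simp
    then show "0 < \<epsilon>" using q unfolding \<epsilon>_def by simp
    show "\<epsilon> \<le> (1 - q) / 2" unfolding \<epsilon>_def by (rule min.cobounded1)
    show "\<epsilon> \<le> \<theta> * (1 - r) * (1 - q) / (2 * \<beta>)" unfolding \<epsilon>_def by (rule min.cobounded2)
  qed
  define \<delta> where "\<delta> = min (1/4) (\<theta> / 2)"
  have del: "0 < \<delta>" "\<delta> \<le> 1/4" "\<delta> \<le> \<theta>/2" using th by (auto simp: \<delta>_def)
  show ?thesis
  proof (rule exI[of _ \<epsilon>], intro conjI eps(1), rule exI[of _ \<delta>], intro conjI del(1) ballI impI)
    fix a b x
    assume aS: "a \<in> Sbeta_plus \<beta>" and bS: "b \<in> Sbeta_plus \<beta>" and xI: "x \<in> {0..1/\<beta> + \<epsilon>}"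
      and gx: "\<bar>gser a b x\<bar> < \<delta>"
    have ba: "\<forall>k. real (a k) \<le> \<beta>" using bnd[OF aS] by auto
    have bb: "\<forall>k. real (b k) \<le> \<beta>" using bnd[OF bS] by auto
    have x: "0 \<le> x" "x \<le> q + \<epsilon>" using xI by (auto simp: q_def)
    have xr: "x \<le> r" using x(2) eps(2) unfolding r_def by (simp add: field_simps)
    have x1: "x < 1" using xr r by linarith
    define A where "A = S a x"
    define B where "B = S b x"
    have g: "gser a b x = 1 + A - B" unfolding A_def B_def by (rule gser_eq[OF ba bb x(1) x1])
    have A0: "0 \<le> A" unfolding A_def by (rule S_nonneg[OF ba x(1) x1])
    have Bq: "S b q \<le> 1" unfolding q_def
      by (rule S_le_1[OF b1 bb]) (use Sbeta_props(2)[OF b1 bS] in auto)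
    have Bup: "B \<le> 1 + \<theta>/2"
    proof (cases "x \<le> q")
      case True
      have "B \<le> S b q" unfolding B_def by (rule S_mono[OF bb x(1) True]) (use q in auto)
      then show ?thesis using Bq th by linarith
    next
      case False
      have d: "B - S b q \<le> \<beta> * (x / (1 - x) - q / (1 - q))" unfolding B_def
        by (rule S_diff[OF bb]) (use q False x1 in auto)
      have e1: "x / (1 - x) - q / (1 - q) = (x - q) / ((1 - x) * (1 - q))"
        using q x1 by (simp add: field_simps)
      have e2: "(x - q) / ((1 - x) * (1 - q)) \<le> \<epsilon> / ((1 - r) * (1 - q))"
        by (rule frac_le) (use False x xr q r in \<open>auto intro: mult_right_mono\<close>)
      have e3: "\<epsilon> / ((1 - r) * (1 - q)) \<le> \<theta> / (2 * \<beta>)"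
      proof -
        have P: "0 < (1 - r) * (1 - q)" using q r by simp
        have "\<epsilon> / ((1 - r) * (1 - q)) \<le> (\<theta> * (1 - r) * (1 - q) / (2 * \<beta>)) / ((1 - r) * (1 - q))"
          by (rule divide_right_mono[OF eps(3)]) (use P in simp)
        also have "\<dots> = \<theta> / (2 * \<beta>)"
        proof -
          have gen: "(\<theta> * p / (2 * \<beta>)) / p = \<theta> / (2 * \<beta>)" if "p \<noteq> 0" for p
            using that b1 by (simp add: field_simps)
          have "(1 - r) * (1 - q) \<noteq> 0" using P by linarith
          from gen[OF this] show ?thesis by (simp only: mult.assoc)
        qed
        finally show ?thesis .
      qed
      have "\<beta> * (x / (1 - x) - q / (1 - q)) \<le> \<beta> * (\<theta> / (2 * \<beta>))"
        using e1 e2 e3 b1 by (intro mult_left_mono) auto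
      also have "\<dots> = \<theta> / 2" using b1 by simp
      finally show ?thesis using d Bq by linarith
    qed
    have Alt: "A < \<theta>" using gx g Bup del by linarith
    have Bgt: "B > 1 - \<delta>" using gx g A0 by linarith
    have Bgeo: "B \<le> \<beta> * x / (1 - x)" unfolding B_def by (rule S_le_geom[OF bb x(1) x1])
    have "\<beta> * x / (1 - x) \<le> \<beta> * x / (1 - r)"
      by (rule frac_le) (use b1 x xr r in auto)
    then have "3/4 < \<beta> * x / (1 - r)" using Bgt Bgeo del by linarith
    then have "3/4 * (1 - r) < \<beta> * x" using r by (simp add: field_simps)
    then have "x0 \<le> x" unfolding x0_def using b1 r by (simp add: field_simps)
    then have xK: "\<theta> \<le> x^K" unfolding \<theta>_def using x0 by (intro power_mono) auto
    have az: "\<forall>k<K. a k = 0"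
    proof (intro allI impI, rule ccontr)
      fix k assume kK: "k < K" and nz: "a k \<noteq> 0"
      have "x^Suc k \<le> A" unfolding A_def by (rule term_le_S[OF ba x(1) x1 nz])
      moreover have "x^K \<le> x^Suc k" by (rule power_decreasing) (use kK x x1 in auto)
      ultimately show False using Alt xK by linarith
    qed
    have Da: "D a x \<le> T" unfolding T_def by (rule D_tail[OF ba x(1) xr r(2) az])
    have Db: "B \<le> D b x" unfolding B_def by (rule D_ge_S[OF bb x(1) x1])
    have "deriv (gser a b) x = D a x - D b x" by (rule deriv_gser[OF ba bb x(1) x1])
    then show "deriv (gser a b) x < - \<delta>" using Da Db T Bgt del by linarith
  qed
qed

end
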